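(* Let $(M,d)$ be a metric space in which any two points $A,B\in M$ are joined by a unique metric segment $[A,B]$. Then $(M,d)$ is an $\mathbb R$-tree if and only if the following Condition (A) holds: for any three distinct points $A,B,C\in M$ there exists a unique $O\in M$ such that $\{X,Y\}\subset\mathcal C_d(Z,O)$ for all distinct $X,Y,Z\in\{A,B,C\}$.
   Context: For a metric space $(M,d)$ and $A,B\in M$, the metric segment is $[A,B]=\{X\in M:\ d(A,X)+d(X,B)=d(A,B)<+\infty\}$, and $\mathcal C_d(A,B)=\{X\in M:\ d(X,A)=d(X,B)+d(A,B)<+\infty\}$. An $\mathbb R$-tree is a nonempty metric space $(M,d)$ such that: (a) any two points $A,B\in M$ are joined by a unique metric segment $[A,B]$; (b) for all $A,B,C\in M$, $[A,B]\cap[A,C]=[A,O]$ for some $O\in M$; (c) if $A,B,C\in M$ and $[A,B]\cap[B,C]=\{B\}$, then $[A,B]\cup[B,C]=[A,C]$. *)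

theory Defs
  imports "HOL-Analysis.Analysis"
begin

definition msegment :: "'a set \<Rightarrow> ('a \<Rightarrow> 'a \<Rightarrow> real) \<Rightarrow> 'a \<Rightarrow> 'a \<Rightarrow> 'a set" where
  "msegment M d A B = {X \<in> M. d A X + d X B = d A B}"

definition Cd :: "'a set \<Rightarrow> ('a \<Rightarrow> 'a \<Rightarrow> real) \<Rightarrow> 'a \<Rightarrow> 'a \<Rightarrow> 'a set" where
  "Cd M d A B = {X \<in> M. d X A = d X B + d A B}"

text \<open>A and B are joined by a unique metric segment: the set [A,B] is the image of an
  isometric embedding of the real interval [0, d(A,B)] sending 0 to A and d(A,B) to B
  (so it is a genuine segment, and every geodesic from A to B, lying in [A,B], coincides with it).\<close>
definition joined_by_unique_segment :: "'a set \<Rightarrow> ('a \<Rightarrow> 'a \<Rightarrow> real) \<Rightarrow> 'a \<Rightarrow> 'a \<Rightarrow> bool" where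
  "joined_by_unique_segment M d A B \<longleftrightarrow>
     (\<exists>\<gamma>::real \<Rightarrow> 'a. \<gamma> 0 = A \<and> \<gamma> (d A B) = B \<and>
        \<gamma> ` {0..d A B} = msegment M d A B \<and>
        (\<forall>s\<in>{0..d A B}. \<forall>t\<in>{0..d A B}. d (\<gamma> s) (\<gamma> t) = \<bar>s - t\<bar>))"

definition R_tree :: "'a set \<Rightarrow> ('a \<Rightarrow> 'a \<Rightarrow> real) \<Rightarrow> bool" where
  "R_tree M d \<longleftrightarrow> Metric_space M d \<and> M \<noteq> {} \<and>
     (\<forall>A\<in>M. \<forall>B\<in>M. joined_by_unique_segment M d A B) \<and>
     (\<forall>A\<in>M. \<forall>B\<in>M. \<forall>C\<in>M. \<exists>P\<in>M. msegment M d A B \<inter> msegment M d A C = msegment M d A P) \<and>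
     (\<forall>A\<in>M. \<forall>B\<in>M. \<forall>C\<in>M. msegment M d A B \<inter> msegment M d B C = {B} \<longrightarrow>
        msegment M d A B \<union> msegment M d B C = msegment M d A C)"

definition condition_A :: "'a set \<Rightarrow> ('a \<Rightarrow> 'a \<Rightarrow> real) \<Rightarrow> bool" where
  "condition_A M d \<longleftrightarrow>
     (\<forall>A\<in>M. \<forall>B\<in>M. \<forall>C\<in>M. A \<noteq> B \<and> A \<noteq> C \<and> B \<noteq> C \<longrightarrow>
        (\<exists>!P. P \<in> M \<and>
           (\<forall>X\<in>{A,B,C}. \<forall>Y\<in>{A,B,C}. \<forall>Z\<in>{A,B,C}. X \<noteq> Y \<and> X \<noteq> Z \<and> Y \<noteq> Z \<longrightarrow>
               {X, Y} \<subseteq> Cd M d Z P)))"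

end

theory Submission
  imports Defs
begin

definition med :: "'a set \<Rightarrow> ('a \<Rightarrow> 'a \<Rightarrow> real) \<Rightarrow> 'a \<Rightarrow> 'a \<Rightarrow> 'a \<Rightarrow> 'a \<Rightarrow> bool" where
  "med M d A B C P \<longleftrightarrow> P \<in> msegment M d A B \<and> P \<in> msegment M d B C \<and> P \<in> msegment M d A C"

context Metric_space
begin

lemma seg_mem: "X \<in> msegment M d A B \<longleftrightarrow> X \<in> M \<and> d A X + d X B = d A B"
  by (simp add: msegment_def)

lemma seg_sym: "msegment M d A B = msegment M d B A"
  by (auto simp: msegment_def commute add.commute)

lemma seg_refl: "A \<in> M \<Longrightarrow> msegment M d A A = {A}"
  using nonneg zero by (auto simp: msegment_def commute)

lemma seg_ends: "A \<in> M \<Longrightarrow> B \<in> M \<Longrightarrow> A \<in> msegment M d A B \<and> B \<in> msegment M d A B"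
  by (simp add: msegment_def)

lemma seg_trans:
  assumes "A \<in> M" "B \<in> M" "Q \<in> msegment M d A B" "X \<in> msegment M d Q B"
  shows "X \<in> msegment M d A B \<and> d A X = d A Q + d Q X"
proof -
  have Q: "Q \<in> M" "d A Q + d Q B = d A B" using assms by (auto simp: seg_mem)
  have X: "X \<in> M" "d Q X + d X B = d Q B" using assms by (auto simp: seg_mem)
  have t1: "d A X \<le> d A Q + d Q X" using triangle[OF assms(1) Q(1) X(1)] .
  have t2: "d A B \<le> d A X + d X B" using triangle[OF assms(1) X(1) assms(2)] .
  show ?thesis using t1 t2 Q X by (auto simp: seg_mem)
qed

lemma seg_geo:
  assumes "joined_by_unique_segment M d A B"
    and "X \<in> msegment M d A B" "Q \<in> msegment M d A B"
  shows "d A Q \<le> d A X \<Longrightarrow> X \<in> msegment M d Q B"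
    and "d A X \<le> d A Q \<Longrightarrow> X \<in> msegment M d A Q"
proof -
  obtain \<gamma> where g: "\<gamma> 0 = A" "\<gamma> (d A B) = B" "\<gamma> ` {0..d A B} = msegment M d A B"
    "\<forall>s\<in>{0..d A B}. \<forall>t\<in>{0..d A B}. d (\<gamma> s) (\<gamma> t) = \<bar>s - t\<bar>"
    using assms(1) unfolding joined_by_unique_segment_def by blast
  obtain s where s: "s \<in> {0..d A B}" "X = \<gamma> s" using assms(2) g(3) by force
  obtain t where t: "t \<in> {0..d A B}" "Q = \<gamma> t" using assms(3) g(3) by force
  have L: "0 \<in> {0..d A B}" "d A B \<in> {0..d A B}" using s by auto
  have XM: "X \<in> M" "Q \<in> M" using assms by (auto simp: seg_mem)
  have dAX: "d A X = s" using g(4) s L g(1) by force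
  have dAO: "d A Q = t" using g(4) t L g(1) by force
  have dOX: "d Q X = \<bar>t - s\<bar>" using g(4) s t by force
  have e1: "d (\<gamma> s) (\<gamma> (d A B)) = \<bar>s - d A B\<bar>" using g(4) s L by blast
  have e2: "d (\<gamma> t) (\<gamma> (d A B)) = \<bar>t - d A B\<bar>" using g(4) t L by blast
  have dXB: "d X B = d A B - s" using e1 s g(2) by auto
  have dOB: "d Q B = d A B - t" using e2 t g(2) by auto
  have dXO: "d X Q = \<bar>t - s\<bar>" using dOX commute by simp
  show "d A Q \<le> d A X \<Longrightarrow> X \<in> msegment M d Q B"
    using XM dAX dAO dOX dXB dOB by (simp add: seg_mem)
  show "d A X \<le> d A Q \<Longrightarrow> X \<in> msegment M d A Q"
    using XM dAX dAO dXO by (simp add: seg_mem)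
qed

lemma Cd_iff: "X \<in> M \<Longrightarrow> X \<in> Cd M d Z P \<longleftrightarrow> d X P + d P Z = d X Z"
  unfolding Cd_def by (auto simp: commute)

lemma condA_iff:
  assumes "A \<in> M" "B \<in> M" "C \<in> M" "A \<noteq> B" "A \<noteq> C" "B \<noteq> C"
  shows "(P \<in> M \<and> (\<forall>X\<in>{A,B,C}. \<forall>Y\<in>{A,B,C}. \<forall>Z\<in>{A,B,C}. X \<noteq> Y \<and> X \<noteq> Z \<and> Y \<noteq> Z \<longrightarrow>
               {X, Y} \<subseteq> Cd M d Z P)) \<longleftrightarrow> med M d A B C P" (is "?L \<longleftrightarrow> ?R")
proof
  assume L: ?L
  have PM: "P \<in> M" using L by blast
  note LL = L[THEN conjunct2, rule_format]
  have "{A, B} \<subseteq> Cd M d C P" using LL[of A B C] assms by simp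
  hence 1: "d A P + d P C = d A C" "d B P + d P C = d B C" using Cd_iff assms by auto
  have "{B, C} \<subseteq> Cd M d A P" using LL[of B C A] assms by simp
  hence 2: "d B P + d P A = d B A" using Cd_iff assms by auto
  show ?R unfolding med_def msegment_def using PM 1 2 commute[of A B] commute[of P A] commute[of B P] by auto
next
  assume R: ?R
  have PM: "P \<in> M" using R by (simp add: med_def msegment_def)
  have s: "d A P + d P B = d A B" "d B P + d P C = d B C" "d A P + d P C = d A C"
    using R by (simp_all add: med_def msegment_def)
  have t: "d B P + d P A = d B A" "d C P + d P B = d C B" "d C P + d P A = d C A"
    using s commute[of A P] commute[of B P] commute[of C P] commute[of A B] commute[of A C] commute[of B C]
    by linarith+
  have key: "d X P + d P Z = d X Z" if "X \<in> {A,B,C}" "Z \<in> {A,B,C}" "X \<noteq> Z" for X Z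
  proof -
    have "X = A \<or> X = B \<or> X = C" "Z = A \<or> Z = B \<or> Z = C" using that(1,2) by auto
    thus ?thesis using that(3) s t by (elim disjE) (simp_all only:, blast+)
  qed
  show ?L
  proof (intro conjI PM ballI impI subsetI)
    fix X Y Z W assume XYZ: "X \<in> {A,B,C}" "Y \<in> {A,B,C}" "Z \<in> {A,B,C}" "X \<noteq> Y \<and> X \<noteq> Z \<and> Y \<noteq> Z"
      and W: "W \<in> {X, Y}"
    have WM: "W \<in> M" using W XYZ assms by auto
    have W1: "W \<in> {A,B,C}" and W2: "W \<noteq> Z" using W XYZ by auto
    have "d W P + d P Z = d W Z" by (rule key[OF W1 XYZ(3) W2])
    thus "W \<in> Cd M d Z P" using Cd_iff[OF WM] by simp
  qed
qed

end

theorem theorem2p2: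
  fixes M :: "'a set" and d :: "'a \<Rightarrow> 'a \<Rightarrow> real"
  assumes "Metric_space M d"
    and "M \<noteq> {}"
    and "\<forall>A\<in>M. \<forall>B\<in>M. joined_by_unique_segment M d A B"
  shows "R_tree M d \<longleftrightarrow> condition_A M d"
proof -
  interpret Metric_space M d by fact
  note J = assms(3)
  show ?thesis
  proof
    assume R: "R_tree M d"
    have b: "\<forall>A\<in>M. \<forall>B\<in>M. \<forall>C\<in>M. \<exists>P\<in>M. msegment M d A B \<inter> msegment M d A C = msegment M d A P"
      and c: "\<forall>A\<in>M. \<forall>B\<in>M. \<forall>C\<in>M. msegment M d A B \<inter> msegment M d B C = {B} \<longrightarrow>
        msegment M d A B \<union> msegment M d B C = msegment M d A C"
      using R unfolding R_tree_def by blast+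
    show "condition_A M d" unfolding condition_A_def
    proof (intro ballI impI)
      fix A B C assume A: "A \<in> M" and B: "B \<in> M" and C: "C \<in> M"
        and dist: "A \<noteq> B \<and> A \<noteq> C \<and> B \<noteq> C"
      obtain Q where QM: "Q \<in> M" and SQ: "msegment M d A B \<inter> msegment M d A C = msegment M d A Q"
        using b A B C by blast
      have "Q \<in> msegment M d A Q" using seg_ends A QM by blast
      hence QAB: "Q \<in> msegment M d A B" and QAC: "Q \<in> msegment M d A C" using SQ by auto
      have "msegment M d B Q \<inter> msegment M d Q C = {Q}"
      proof
        show "{Q} \<subseteq> msegment M d B Q \<inter> msegment M d Q C" using seg_ends B C QM by blast
        show "msegment M d B Q \<inter> msegment M d Q C \<subseteq> {Q}"
        proof
          fix X assume X: "X \<in> msegment M d B Q \<inter> msegment M d Q C"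
          have XM: "X \<in> M" using X by (simp add: seg_mem)
          have "X \<in> msegment M d Q B" using X seg_sym by blast
          from seg_trans[OF A B QAB this] have X1: "X \<in> msegment M d A B" "d A X = d A Q + d Q X" by auto
          from seg_trans[OF A C QAC] X have X2: "X \<in> msegment M d A C" by blast
          have "X \<in> msegment M d A Q" using X1 X2 SQ by blast
          hence "d A X + d X Q = d A Q" by (simp add: seg_mem)
          hence "d Q X = 0" using X1 commute[of X Q] nonneg[of Q X] by linarith
          thus "X \<in> {Q}" using XM QM by simp
        qed
      qed
      hence "msegment M d B Q \<union> msegment M d Q C = msegment M d B C" using c B C QM by blast
      hence QBC: "Q \<in> msegment M d B C" using seg_ends B QM by blast
      have mQ: "med M d A B C Q" using QAB QAC QBC by (simp add: med_def)
      have uq: "P = Q" if mP: "med M d A B C P" for P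
      proof -
        have PAQ: "P \<in> msegment M d A Q" using mP SQ by (auto simp: med_def)
        have PBC: "P \<in> msegment M d B C" using mP by (auto simp: med_def)
        have PM: "P \<in> M" using PAQ by (simp add: seg_mem)
        have h1: "d A P + d P Q = d A Q" using PAQ by (simp add: seg_mem)
        have h2: "d A Q + d Q B = d A B" "d A Q + d Q C = d A C" using QAB QAC by (simp_all add: seg_mem)
        have "P \<in> msegment M d B Q \<union> msegment M d Q C"
          using PBC \<open>msegment M d B Q \<union> msegment M d Q C = msegment M d B C\<close> by simp
        hence "d P Q \<le> 0"
        proof
          assume "P \<in> msegment M d B Q"
          hence "d B P + d P Q = d B Q" by (simp add: seg_mem)
          moreover have "d A B \<le> d A P + d P B" using triangle[OF A PM B] .
          ultimately show ?thesis using h1 h2 commute[of B P] commute[of B Q] by linarith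
        next
          assume "P \<in> msegment M d Q C"
          hence "d Q P + d P C = d Q C" by (simp add: seg_mem)
          moreover have "d A C \<le> d A P + d P C" using triangle[OF A PM C] .
          ultimately show ?thesis using h1 h2 commute[of Q P] by linarith
        qed
        hence "d P Q = 0" using nonneg[of P Q] by linarith
        thus ?thesis using PM QM by simp
      qed
      have "\<exists>!P. med M d A B C P" using mQ uq by blast
      moreover have "med M d A B C P \<Longrightarrow> P \<in> M" for P by (simp add: med_def seg_mem)
      ultimately show "\<exists>!P. P \<in> M \<and> (\<forall>X\<in>{A,B,C}. \<forall>Y\<in>{A,B,C}. \<forall>Z\<in>{A,B,C}. X \<noteq> Y \<and> X \<noteq> Z \<and> Y \<noteq> Z \<longrightarrow>
               {X, Y} \<subseteq> Cd M d Z P)"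
        using condA_iff[OF A B C] dist by simp
    qed
  next
    assume CA: "condition_A M d"
    have MED: "\<exists>!P. med M d A B C P" if A: "A \<in> M" and B: "B \<in> M" and C: "C \<in> M"
      and dist: "A \<noteq> B" "A \<noteq> C" "B \<noteq> C" for A B C
    proof -
      have "\<exists>!P. P \<in> M \<and> (\<forall>X\<in>{A,B,C}. \<forall>Y\<in>{A,B,C}. \<forall>Z\<in>{A,B,C}. X \<noteq> Y \<and> X \<noteq> Z \<and> Y \<noteq> Z \<longrightarrow>
               {X, Y} \<subseteq> Cd M d Z P)" using CA[unfolded condition_A_def, rule_format, OF A B C] dist by simp
      thus ?thesis using condA_iff[OF A B C dist] by simp
    qed
    have bb: "\<exists>P\<in>M. msegment M d A B \<inter> msegment M d A C = msegment M d A P"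
      if A: "A \<in> M" and B: "B \<in> M" and C: "C \<in> M" for A B C
    proof (cases "A = B \<or> A = C \<or> B = C")
      case True
      then show ?thesis
      proof (elim disjE)
        assume "A = B" thus ?thesis using A C seg_refl seg_ends by (intro bexI[of _ A]) auto
      next
        assume "A = C" thus ?thesis using A B seg_refl seg_ends by (intro bexI[of _ A]) auto
      next
        assume "B = C" thus ?thesis using B by auto
      qed
    next
      case False
      then obtain Q where mQ: "med M d A B C Q" and uq: "\<And>P. med M d A B C P \<Longrightarrow> P = Q"
        using MED[OF A B C] by blast
      have QAB: "Q \<in> msegment M d A B" and QAC: "Q \<in> msegment M d A C" and QBC: "Q \<in> msegment M d B C"
        using mQ by (auto simp: med_def)
      have QM: "Q \<in> M" using QAB by (simp add: seg_mem)
      have "msegment M d A B \<inter> msegment M d A C = msegment M d A Q"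
      proof
        show "msegment M d A Q \<subseteq> msegment M d A B \<inter> msegment M d A C"
        proof
          fix X assume X: "X \<in> msegment M d A Q"
          have X': "X \<in> msegment M d Q A" using X seg_sym by blast
          have "X \<in> msegment M d B A" using seg_trans[OF B A _ X'] QAB seg_sym by blast
          moreover have "X \<in> msegment M d C A" using seg_trans[OF C A _ X'] QAC seg_sym by blast
          ultimately show "X \<in> msegment M d A B \<inter> msegment M d A C" using seg_sym by blast
        qed
        show "msegment M d A B \<inter> msegment M d A C \<subseteq> msegment M d A Q"
        proof
          fix X assume X: "X \<in> msegment M d A B \<inter> msegment M d A C"
          show "X \<in> msegment M d A Q"
          proof (cases "d A X \<le> d A Q")
            case True
            then show ?thesis using seg_geo(2)[OF J[rule_format, OF A B] _ QAB] X by blast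
          next
            case False
            hence le: "d A Q \<le> d A X" by simp
            have "X \<in> msegment M d Q C" using seg_geo(1)[OF J[rule_format, OF A C] _ QAC le] X by blast
            hence "X \<in> msegment M d B C" using seg_trans[OF B C QBC] by blast
            hence "med M d A B C X" using X by (simp add: med_def)
            hence "X = Q" by (rule uq)
            thus ?thesis using seg_ends A QM by blast
          qed
        qed
      qed
      thus ?thesis using QM by blast
    qed
    have cc: "msegment M d A B \<union> msegment M d B C = msegment M d A C"
      if A: "A \<in> M" and B: "B \<in> M" and C: "C \<in> M"
        and H: "msegment M d A B \<inter> msegment M d B C = {B}" for A B C
    proof -
      have BAC: "B \<in> msegment M d A C"
      proof (cases "A = B \<or> B = C")
        case True thus ?thesis using seg_ends A C by blast
      next
        case False
        have AC: "A \<noteq> C"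
        proof
          assume "A = C"
          hence "A \<in> msegment M d A B \<inter> msegment M d B C" using seg_ends A B seg_sym by blast
          thus False using H False by blast
        qed
        then obtain Q where mQ: "med M d A B C Q" using MED[OF A B C] False by blast
        hence "Q \<in> msegment M d A B \<inter> msegment M d B C" by (simp add: med_def)
        hence "Q = B" using H by blast
        thus ?thesis using mQ by (simp add: med_def)
      qed
      show ?thesis
      proof
        show "msegment M d A B \<union> msegment M d B C \<subseteq> msegment M d A C"
        proof
          fix X assume "X \<in> msegment M d A B \<union> msegment M d B C"
          thus "X \<in> msegment M d A C"
          proof
            assume "X \<in> msegment M d A B"
            hence "X \<in> msegment M d B A" using seg_sym by blast
            hence "X \<in> msegment M d C A" using seg_trans[OF C A] BAC seg_sym by blast
            thus ?thesis using seg_sym by blast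
          next
            assume "X \<in> msegment M d B C"
            thus ?thesis using seg_trans[OF A C BAC] by blast
          qed
        qed
        show "msegment M d A C \<subseteq> msegment M d A B \<union> msegment M d B C"
        proof
          fix X assume X: "X \<in> msegment M d A C"
          show "X \<in> msegment M d A B \<union> msegment M d B C"
          proof (cases "d A X \<le> d A B")
            case True
            thus ?thesis using seg_geo(2)[OF J[rule_format, OF A C] X BAC] by blast
          next
            case False
            thus ?thesis using seg_geo(1)[OF J[rule_format, OF A C] X BAC] by simp
          qed
        qed
      qed
    qed
    show "R_tree M d" unfolding R_tree_def
      using assms(1,2) J bb cc by blast
  qed
qed

end
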